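(* Let $(R,\mathfrak m)$ be a noetherian local ring and $M$ an arbitrary $R$-module. Then $$\operatorname{Ass}_R(D(M))\subseteq \operatorname{Att}_R(M),$$ and the set of prime ideals which are maximal (with respect to inclusion) in $\operatorname{Ass}_R(D(M))$ coincides with the set of prime ideals which are maximal in $\operatorname{Att}_R(M)$.
   Context: $E=E_R(R/\mathfrak m)$ denotes a fixed injective hull of $R/\mathfrak m$, and $D(\cdot)=\operatorname{Hom}_R(\cdot,E)$ is the Matlis duality functor. For an arbitrary $R$-module $N$ (not necessarily finitely generated or artinian): $\operatorname{Ass}_R(N)$ is the set of prime ideals $\mathfrak p$ of $R$ such that $\mathfrak p=\operatorname{Ann}_R(n)$ for some $n\in N$; $\operatorname{Att}_R(N)$ is the set of prime ideals $\mathfrak p$ of $R$ such that $\mathfrak p=\operatorname{Ann}_R(N/U)$ for some $R$-submodule $U\subseteq N$. *)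

theory Defs
  imports Main "HOL.Modules"
begin

text \<open>Commutative rings are types of class comm_ring_1; R-modules are given by a
scalar multiplication satisfying the HOL locale module (Main, theory Modules).\<close>

definition r_ideal :: "'a::comm_ring_1 set \<Rightarrow> bool" where
  "r_ideal I \<longleftrightarrow> module.subspace ((*) :: 'a \<Rightarrow> 'a \<Rightarrow> 'a) I"

definition prime_ideal :: "'a::comm_ring_1 set \<Rightarrow> bool" where
  "prime_ideal P \<longleftrightarrow> r_ideal P \<and> P \<noteq> UNIV \<and> (\<forall>a b. a * b \<in> P \<longrightarrow> a \<in> P \<or> b \<in> P)"

definition noetherian_ring :: "'a::comm_ring_1 itself \<Rightarrow> bool" where
  "noetherian_ring _ \<longleftrightarrow>
     (\<forall>I::'a set. r_ideal I \<longrightarrow> (\<exists>F. finite F \<and> I = module.span ((*) :: 'a \<Rightarrow> 'a \<Rightarrow> 'a) F))"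

definition local_ring_max :: "'a::comm_ring_1 set \<Rightarrow> bool" where
  "local_ring_max m \<longleftrightarrow> r_ideal m \<and> m \<noteq> UNIV \<and> (\<forall>I. r_ideal I \<and> I \<noteq> UNIV \<longrightarrow> I \<subseteq> m)"

text \<open>Injectivity of a module (Baer's criterion).\<close>
definition baer_injective :: "('a::comm_ring_1 \<Rightarrow> 'e::ab_group_add \<Rightarrow> 'e) \<Rightarrow> bool" where
  "baer_injective sE \<longleftrightarrow>
     (\<forall>(I::'a set) (g::'a \<Rightarrow> 'e). r_ideal I
        \<and> (\<forall>a\<in>I. \<forall>b\<in>I. g (a + b) = g a + g b)
        \<and> (\<forall>r. \<forall>a\<in>I. g (r * a) = sE r (g a))
        \<longrightarrow> (\<exists>x. \<forall>a\<in>I. g a = sE a x))"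

text \<open>E (with scalar multiplication sE) is an injective hull of R/m: E is an
injective module containing a cyclic submodule R e isomorphic to R/m
(i.e. Ann(e) = m) which is essential in E.\<close>
definition injective_hull_residue ::
  "('a::comm_ring_1 \<Rightarrow> 'e::ab_group_add \<Rightarrow> 'e) \<Rightarrow> 'a set \<Rightarrow> bool" where
  "injective_hull_residue sE m \<longleftrightarrow> module sE \<and> baer_injective sE \<and>
     (\<exists>e. e \<noteq> 0 \<and> {r. sE r e = 0} = m \<and>
        (\<forall>N. module.subspace sE N \<and> N \<noteq> {0} \<longrightarrow> N \<inter> module.span sE {e} \<noteq> {0}))"

text \<open>Ass_R(D(M)) where D(M) = Hom_R(M,E) with pointwise module structure:
the annihilator of f in D(M) is {r. r f = 0} = {r. \<forall>x. r (f x) = 0}.\<close>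
definition Ass_matlis_dual ::
  "('a::comm_ring_1 \<Rightarrow> 'm::ab_group_add \<Rightarrow> 'm) \<Rightarrow> ('a \<Rightarrow> 'e::ab_group_add \<Rightarrow> 'e) \<Rightarrow> 'a set set" where
  "Ass_matlis_dual sM sE =
     {P. prime_ideal P \<and> (\<exists>f. module_hom sM sE f \<and> P = {r. \<forall>x. sE r (f x) = 0})}"

text \<open>Att_R(M): primes of the form Ann_R(M/U), U a submodule of M.\<close>
definition Att :: "('a::comm_ring_1 \<Rightarrow> 'm::ab_group_add \<Rightarrow> 'm) \<Rightarrow> 'a set set" where
  "Att sM = {P. prime_ideal P \<and> (\<exists>U. module.subspace sM U \<and> P = {r. \<forall>x. sM r x \<in> U})}"

definition maximal_elements :: "'a set set \<Rightarrow> 'a set set" where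
  "maximal_elements A = {P \<in> A. \<forall>Q\<in>A. P \<subseteq> Q \<longrightarrow> Q = P}"

end

theory Submission imports Defs begin

definition lin_graph :: "('a::comm_ring_1 \<Rightarrow> 'm::ab_group_add \<Rightarrow> 'm) \<Rightarrow> ('a \<Rightarrow> 'e::ab_group_add \<Rightarrow> 'e) \<Rightarrow> ('m \<times> 'e) set \<Rightarrow> bool" where
  "lin_graph sM sE G \<longleftrightarrow> (\<forall>x y z. (x,y)\<in>G \<longrightarrow> (x,z)\<in>G \<longrightarrow> y = z) \<and> (0,0) \<in> G \<and>
     (\<forall>x y x' y'. (x,y)\<in>G \<longrightarrow> (x',y')\<in>G \<longrightarrow> (x+x', y+y') \<in> G) \<and>
     (\<forall>r x y. (x,y)\<in>G \<longrightarrow> (sM r x, sE r y) \<in> G)"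

lemma chain_finite_sub:
  assumes "finite F" "F \<subseteq> \<Union>C" "C \<noteq> {}" "\<forall>X\<in>C. \<forall>Y\<in>C. X \<subseteq> Y \<or> Y \<subseteq> X"
  shows "\<exists>X\<in>C. F \<subseteq> X"
  using assms(1,2)
proof (induction F rule: finite_induct)
  case empty then show ?case using assms(3) by blast
next
  case (insert x F)
  then obtain X where X: "X \<in> C" "F \<subseteq> X" by blast
  from insert obtain Y where Y: "Y \<in> C" "x \<in> Y" by blast
  have "X \<subseteq> Y \<or> Y \<subseteq> X" using assms(4) X(1) Y(1) by blast
  then show ?case
  proof
    assume "X \<subseteq> Y" then show ?case using X Y by blast
  next
    assume "Y \<subseteq> X" then show ?case using X Y by blast
  qed
qed

lemma chain_pair:
  assumes "\<forall>X\<in>C. \<forall>Y\<in>C. X \<subseteq> Y \<or> Y \<subseteq> X" "a \<in> \<Union>C" "b \<in> \<Union>C"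
  shows "\<exists>X\<in>C. a \<in> X \<and> b \<in> X"
  using assms by blast

lemma times_module: "module ((*) :: 'a::comm_ring_1 \<Rightarrow> 'a \<Rightarrow> 'a)"
  by unfold_locales (auto simp: algebra_simps)

lemma noeth_max:
  fixes S :: "'a::comm_ring_1 set set"
  assumes N: "noetherian_ring TYPE('a)" and ne: "S \<noteq> {}" and id: "\<forall>I\<in>S. r_ideal I"
  shows "\<exists>I\<in>S. \<forall>J\<in>S. I \<subseteq> J \<longrightarrow> J = I"
proof -
  interpret T: module "(*) :: 'a \<Rightarrow> 'a \<Rightarrow> 'a" by (rule times_module)
  have "\<forall>C\<in>chains S. \<exists>U\<in>S. \<forall>X\<in>C. X \<subseteq> U"
  proof
    fix C assume C: "C \<in> chains S"
    hence CS: "C \<subseteq> S" and ch: "\<forall>X\<in>C. \<forall>Y\<in>C. X \<subseteq> Y \<or> Y \<subseteq> X"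
      by (auto simp: chains_def chain_subset_def)
    show "\<exists>U\<in>S. \<forall>X\<in>C. X \<subseteq> U"
    proof (cases "C = {}")
      case True then show ?thesis using ne by blast
    next
      case False
      have sub: "\<forall>X\<in>C. T.subspace X" using CS id by (auto simp: r_ideal_def)
      have "r_ideal (\<Union>C)" unfolding r_ideal_def
      proof (rule T.subspaceI)
        show "0 \<in> \<Union>C" using False sub T.subspace_0 by blast
      next
        fix x y assume "x \<in> \<Union>C" "y \<in> \<Union>C"
        then obtain X where "X \<in> C" "x \<in> X" "y \<in> X" using chain_pair[OF ch] by blast
        then show "x + y \<in> \<Union>C" using sub T.subspace_add by (meson UnionI)
      next
        fix c x assume "x \<in> \<Union>C"
        then obtain X where "X \<in> C" "x \<in> X" by blast
        then show "c * x \<in> \<Union>C" using sub T.subspace_scale by (meson UnionI)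
      qed
      then obtain F where F: "finite F" "\<Union>C = T.span F" using N by (auto simp: noetherian_ring_def)
      then have "F \<subseteq> \<Union>C" using T.span_superset by blast
      then obtain X where X: "X \<in> C" "F \<subseteq> X" using chain_finite_sub[OF F(1) _ False ch] by blast
      then have "T.span F \<subseteq> X" using sub T.span_minimal by simp
      then have "\<forall>Y\<in>C. Y \<subseteq> X" using F by blast
      then show ?thesis using X CS by blast
    qed
  qed
  then show ?thesis by (rule Zorn_Lemma2)
qed


lemma lin_graph_sv: "lin_graph sM sE G \<Longrightarrow> (x,y)\<in>G \<Longrightarrow> (x,z)\<in>G \<Longrightarrow> y = z"
  and lin_graph_0: "lin_graph sM sE G \<Longrightarrow> (0,0) \<in> G"
  and lin_graph_add: "lin_graph sM sE G \<Longrightarrow> (x,y)\<in>G \<Longrightarrow> (x',y')\<in>G \<Longrightarrow> (x+x',y+y') \<in> G"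
  and lin_graph_scale: "lin_graph sM sE G \<Longrightarrow> (x,y)\<in>G \<Longrightarrow> (sM r x, sE r y) \<in> G"
  unfolding lin_graph_def by auto

lemma lin_graph_the:
  assumes "lin_graph sM sE G" "(x,y) \<in> G" shows "(THE z. (x,z) \<in> G) = y"
  using assms by (blast intro: the_equality dest: lin_graph_sv)

lemma lin_graph_neg:
  assumes "module sM" "module sE" "lin_graph sM sE G" "(x,y) \<in> G" shows "(-x,-y) \<in> G"
proof -
  have "(sM (-1) x, sE (-1) y) \<in> G" using assms(3,4) by (rule lin_graph_scale)
  then show ?thesis by (simp add: module.scale_minus_left[OF assms(1)] module.scale_minus_left[OF assms(2)]
    module.scale_one[OF assms(1)] module.scale_one[OF assms(2)])
qed

lemma lin_graph_diff:
  assumes "module sM" "module sE" "lin_graph sM sE G" "(x,y) \<in> G" "(x',y') \<in> G" shows "(x'-x,y'-y) \<in> G"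
proof -
  have "(x' + -x, y' + -y) \<in> G" using lin_graph_add[OF assms(3,5) lin_graph_neg[OF assms(1-4)]] .
  then show ?thesis by simp
qed

lemma extend_hom:
  fixes sM :: "'a::comm_ring_1 \<Rightarrow> 'm::ab_group_add \<Rightarrow> 'm" and sE :: "'a \<Rightarrow> 'e::ab_group_add \<Rightarrow> 'e"
  assumes MM: "module sM" and ME: "module sE" and B: "baer_injective sE" and G0: "lin_graph sM sE G0"
  shows "\<exists>H. module_hom sM sE H \<and> (\<forall>x y. (x,y) \<in> G0 \<longrightarrow> H x = y)"
proof -
  interpret M: module sM by (rule MM)
  interpret E: module sE by (rule ME)
  interpret T: module "(*) :: 'a \<Rightarrow> 'a \<Rightarrow> 'a" by (rule times_module)
  define F where "F = {G. lin_graph sM sE G \<and> G0 \<subseteq> G}"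
  have "\<forall>C\<in>chains F. \<exists>U\<in>F. \<forall>X\<in>C. X \<subseteq> U"
  proof
    fix C assume C: "C \<in> chains F"
    hence CS: "C \<subseteq> F" and ch: "\<forall>X\<in>C. \<forall>Y\<in>C. X \<subseteq> Y \<or> Y \<subseteq> X"
      by (auto simp: chains_def chain_subset_def)
    show "\<exists>U\<in>F. \<forall>X\<in>C. X \<subseteq> U"
    proof (cases "C = {}")
      case True then show ?thesis using G0 by (auto simp: F_def)
    next
      case False
      have lg: "\<forall>X\<in>C. lin_graph sM sE X" "\<forall>X\<in>C. G0 \<subseteq> X" using CS by (auto simp: F_def)
      have "lin_graph sM sE (\<Union>C)" unfolding lin_graph_def
      proof (intro conjI allI impI)
        fix x y z assume "(x,y) \<in> \<Union>C" "(x,z) \<in> \<Union>C"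
        then obtain X where "X \<in> C" "(x,y) \<in> X" "(x,z) \<in> X" using chain_pair[OF ch] by blast
        then show "y = z" using lg lin_graph_sv by metis
      next
        show "(0,0) \<in> \<Union>C" using False lg lin_graph_0 by blast
      next
        fix x y x' y' assume "(x,y) \<in> \<Union>C" "(x',y') \<in> \<Union>C"
        then obtain X where "X \<in> C" "(x,y) \<in> X" "(x',y') \<in> X" using chain_pair[OF ch] by blast
        then show "(x+x',y+y') \<in> \<Union>C" using lg lin_graph_add by blast
      next
        fix r x y assume "(x,y) \<in> \<Union>C"
        then obtain X where "X \<in> C" "(x,y) \<in> X" by blast
        then show "(sM r x, sE r y) \<in> \<Union>C" using lg lin_graph_scale by blast
      qed
      moreover have "G0 \<subseteq> \<Union>C" using False lg by blast
      ultimately show ?thesis by (auto simp: F_def)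
    qed
  qed
  then obtain G where GF: "G \<in> F" and Gmax: "\<forall>X\<in>F. G \<subseteq> X \<longrightarrow> X = G" using Zorn_Lemma2[of F] by blast
  have lg: "lin_graph sM sE G" and G0G: "G0 \<subseteq> G" using GF by (auto simp: F_def)
  have sv: "\<And>x y z. (x,y)\<in>G \<Longrightarrow> (x,z)\<in>G \<Longrightarrow> y = z" and z: "(0,0) \<in> G"
    and ad: "\<And>x y x' y'. (x,y)\<in>G \<Longrightarrow> (x',y')\<in>G \<Longrightarrow> (x+x', y+y') \<in> G"
    and sc: "\<And>r x y. (x,y)\<in>G \<Longrightarrow> (sM r x, sE r y) \<in> G"
    using lin_graph_sv[OF lg] lin_graph_0[OF lg] lin_graph_add[OF lg] lin_graph_scale[OF lg] by blast+
  define h where "h a = (THE y. (a,y) \<in> G)" for a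
  have hG: "(a, h a) \<in> G" if "(a,y) \<in> G" for a y using lin_graph_the[OF lg that] that unfolding h_def by simp
  have tot: "\<exists>y. (x,y) \<in> G" for x
  proof (rule ccontr)
    assume nx: "\<not> (\<exists>y. (x,y) \<in> G)"
    define I where "I = {r. \<exists>y. (sM r x, y) \<in> G}"
    define g where "g r = h (sM r x)" for r
    have gI: "(sM r x, g r) \<in> G" if "r \<in> I" for r using that hG unfolding I_def g_def by blast
    have "r_ideal I" unfolding r_ideal_def
    proof (rule T.subspaceI)
      show "0 \<in> I" using z by (auto simp: I_def)
    next
      fix a b assume "a \<in> I" "b \<in> I"
      then have "(sM a x + sM b x, g a + g b) \<in> G" using gI ad by blast
      then show "a + b \<in> I" by (auto simp: I_def M.scale_left_distrib)
    next
      fix c a assume "a \<in> I"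
      then have "(sM c (sM a x), sE c (g a)) \<in> G" using gI sc by blast
      then show "c * a \<in> I" by (auto simp: I_def)
    qed
    moreover have "\<forall>a\<in>I. \<forall>b\<in>I. g (a + b) = g a + g b"
    proof (intro ballI)
      fix a b assume ab: "a \<in> I" "b \<in> I"
      then have "(sM a x + sM b x, g a + g b) \<in> G" using gI ad by blast
      moreover have "(sM (a+b) x, g (a+b)) \<in> G" using ab calculation gI by (metis I_def M.scale_left_distrib mem_Collect_eq)
      ultimately show "g (a + b) = g a + g b" using sv by (metis M.scale_left_distrib)
    qed
    moreover have "\<forall>r. \<forall>a\<in>I. g (r * a) = sE r (g a)"
    proof (intro allI ballI)
      fix c a assume a: "a \<in> I"
      then have 1: "(sM (c*a) x, sE c (g a)) \<in> G" using gI sc by fastforce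
      then have "(sM (c*a) x, g (c*a)) \<in> G" using gI by (auto simp: I_def)
      then show "g (c * a) = sE c (g a)" using sv 1 by blast
    qed
    ultimately obtain e' where e': "\<forall>a\<in>I. g a = sE a e'" using B unfolding baer_injective_def by blast
    define G' where "G' = {(a + sM r x, b + sE r e') | a b r. (a,b) \<in> G}"
    have "lin_graph sM sE G'" unfolding lin_graph_def
    proof (intro conjI allI impI)
      fix u y z assume "(u,y) \<in> G'" "(u,z) \<in> G'"
      then obtain a b r a' b' r' where A: "(a,b) \<in> G" "(a',b') \<in> G" "u = a + sM r x" "y = b + sE r e'"
        "u = a' + sM r' x" "z = b' + sE r' e'" unfolding G'_def by blast
      have eq: "sM (r - r') x = a' - a" using A(3,5) by (simp add: M.scale_left_diff_distrib algebra_simps)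
      have D: "(a' - a, b' - b) \<in> G" using lin_graph_diff[OF MM ME lg A(1,2)] .
      then have "r - r' \<in> I" using eq by (auto simp: I_def)
      then have "(a' - a, sE (r - r') e') \<in> G" using gI e' eq by metis
      then have "b' - b = sE (r - r') e'" using sv D by blast
      then show "y = z" using A by (simp add: E.scale_left_diff_distrib algebra_simps)
    next
      have "(0 + sM 0 x, 0 + sE 0 e') \<in> G'" unfolding G'_def using z by blast
      then show "(0,0) \<in> G'" by simp
    next
      fix u y u' y' assume "(u,y) \<in> G'" "(u',y') \<in> G'"
      then obtain a b r a' b' r' where A: "(a,b) \<in> G" "(a',b') \<in> G" "u = a + sM r x" "y = b + sE r e'"
        "u' = a' + sM r' x" "y' = b' + sE r' e'" unfolding G'_def by blast
      have "(a+a', b+b') \<in> G" using ad A by blast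
      moreover have "u + u' = (a+a') + sM (r+r') x" "y + y' = (b+b') + sE (r+r') e'"
        using A by (simp_all add: M.scale_left_distrib E.scale_left_distrib algebra_simps)
      ultimately show "(u+u', y+y') \<in> G'" unfolding G'_def by blast
    next
      fix c u y assume "(u,y) \<in> G'"
      then obtain a b r where A: "(a,b) \<in> G" "u = a + sM r x" "y = b + sE r e'" unfolding G'_def by blast
      have "(sM c a, sE c b) \<in> G" using sc A by blast
      moreover have "sM c u = sM c a + sM (c*r) x" "sE c y = sE c b + sE (c*r) e'"
        using A by (simp_all add: M.scale_right_distrib E.scale_right_distrib)
      ultimately show "(sM c u, sE c y) \<in> G'" unfolding G'_def by blast
    qed
    moreover have "G \<subseteq> G'"
    proof
      fix p assume "p \<in> G"
      then obtain a b where "p = (a,b)" "(a,b) \<in> G" by (cases p) auto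
      then have "(a + sM 0 x, b + sE 0 e') \<in> G'" unfolding G'_def by blast
      then show "p \<in> G'" using \<open>p = (a,b)\<close> by simp
    qed
    ultimately have "G' = G" using Gmax G0G by (auto simp: F_def)
    moreover have "(0 + sM 1 x, 0 + sE 1 e') \<in> G'" unfolding G'_def using z by blast
    then have "(x, e') \<in> G'" by simp
    ultimately show False using nx by blast
  qed
  have hx: "(x, h x) \<in> G" for x using tot hG by blast
  have "module_hom sM sE h" unfolding module_hom_iff
  proof (intro conjI allI)
    show "module sM" "module sE" by (fact MM, fact ME)
  next
    fix x y show "h (x + y) = h x + h y" using ad[OF hx hx] hx sv by blast
  next
    fix c x show "h (sM c x) = sE c (h x)" using sc[OF hx] hx sv by blast
  qed
  moreover have "\<forall>x y. (x,y) \<in> G0 \<longrightarrow> h x = y" using G0G hx sv by blast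
  ultimately show ?thesis by blast
qed


lemma ann_ideal:
  assumes ME: "module sE" shows "r_ideal {r::'a::comm_ring_1. \<forall>x. sE r (g x) = 0}"
proof -
  interpret E: module sE by (rule ME)
  interpret T: module "(*) :: 'a \<Rightarrow> 'a \<Rightarrow> 'a" by (rule times_module)
  show ?thesis unfolding r_ideal_def
    by (rule T.subspaceI) (auto simp: E.scale_left_distrib simp flip: E.scale_scale)
qed

lemma att_in_ass:
  fixes m :: "'a::comm_ring_1 set"
    and sM :: "'a \<Rightarrow> 'm::ab_group_add \<Rightarrow> 'm"
    and sE :: "'a \<Rightarrow> 'e::ab_group_add \<Rightarrow> 'e"
  assumes N: "noetherian_ring TYPE('a)"
    and L: "local_ring_max m"
    and MM: "module sM" and ME: "module sE" and B: "baer_injective sE"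
    and e0: "e \<noteq> 0" and em: "{r. sE r e = 0} = m"
    and P: "P \<in> Att sM"
  shows "\<exists>Q\<in>Ass_matlis_dual sM sE. P \<subseteq> Q"
proof -
  interpret M: module sM by (rule MM)
  interpret E: module sE by (rule ME)
  interpret T: module "(*) :: 'a \<Rightarrow> 'a \<Rightarrow> 'a" by (rule times_module)
  obtain U where Pp: "prime_ideal P" and U: "M.subspace U" and PU: "P = {r. \<forall>x. sM r x \<in> U}"
    using P by (auto simp: Att_def)
  have "1 \<notin> P"
  proof
    assume "1 \<in> P"
    moreover have Ps: "T.subspace P" using Pp by (simp add: prime_ideal_def r_ideal_def)
    ultimately have "r * 1 \<in> P" for r using T.subspace_scale[OF Ps] by blast
    then have "r \<in> P" for r by simp
    then show False using Pp by (auto simp: prime_ideal_def)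
  qed
  then obtain x0 where x0: "x0 \<notin> U" using PU by auto
  define I where "I = {r. sM r x0 \<in> U}"
  have "r_ideal I" unfolding r_ideal_def I_def
    using U by (intro T.subspaceI) (auto simp: M.subspace_0 M.subspace_add M.scale_left_distrib M.subspace_scale simp flip: M.scale_scale)
  moreover have "1 \<notin> I" using x0 by (simp add: I_def)
  then have "I \<noteq> UNIV" by blast
  ultimately have Im: "I \<subseteq> m" using L by (auto simp: local_ring_max_def)
  define G0 where "G0 = {(u + sM r x0, sE r e) | u r. u \<in> U}"
  have "lin_graph sM sE G0" unfolding lin_graph_def
  proof (intro conjI allI impI)
    fix v y z assume "(v,y) \<in> G0" "(v,z) \<in> G0"
    then obtain u r u' r' where A: "u \<in> U" "u' \<in> U" "v = u + sM r x0" "y = sE r e"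
        "v = u' + sM r' x0" "z = sE r' e" unfolding G0_def by blast
    have eq: "sM (r - r') x0 = u' - u" using A(3,5) by (simp add: M.scale_left_diff_distrib algebra_simps)
    have "u' - u \<in> U" using A(1,2) U M.subspace_diff by blast
    then have "r - r' \<in> m" using eq Im by (auto simp: I_def)
    then have "sE (r - r') e = 0" using em by blast
    then show "y = z" using A by (simp add: E.scale_left_diff_distrib)
  next
    have "(0 + sM 0 x0, sE 0 e) \<in> G0" unfolding G0_def using U M.subspace_0 by blast
    then show "(0,0) \<in> G0" by simp
  next
    fix v y v' y' assume "(v,y) \<in> G0" "(v',y') \<in> G0"
    then obtain u r u' r' where A: "u \<in> U" "u' \<in> U" "v = u + sM r x0" "y = sE r e"
        "v' = u' + sM r' x0" "y' = sE r' e" unfolding G0_def by blast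
    have "u + u' \<in> U" using A U M.subspace_add by blast
    moreover have "v + v' = (u+u') + sM (r+r') x0" "y + y' = sE (r+r') e"
      using A by (simp_all add: M.scale_left_distrib E.scale_left_distrib algebra_simps)
    ultimately show "(v+v', y+y') \<in> G0" unfolding G0_def by blast
  next
    fix c v y assume "(v,y) \<in> G0"
    then obtain u r where A: "u \<in> U" "v = u + sM r x0" "y = sE r e" unfolding G0_def by blast
    have "sM c u \<in> U" using A U M.subspace_scale by blast
    moreover have "sM c v = sM c u + sM (c*r) x0" "sE c y = sE (c*r) e"
      using A by (simp_all add: M.scale_right_distrib)
    ultimately show "(sM c v, sE c y) \<in> G0" unfolding G0_def by blast
  qed
  then obtain H where H: "module_hom sM sE H" and HG: "\<forall>x y. (x,y) \<in> G0 \<longrightarrow> H x = y"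
    using extend_hom[OF MM ME B] by blast
  have HU: "H u = 0" if "u \<in> U" for u
  proof -
    have "(u + sM 0 x0, sE 0 e) \<in> G0" unfolding G0_def using that by blast
    then show ?thesis using HG by fastforce
  qed
  have Hx0: "H x0 = e"
  proof -
    have "(0 + sM 1 x0, sE 1 e) \<in> G0" unfolding G0_def using U M.subspace_0 by blast
    then show ?thesis using HG by fastforce
  qed
  define S where "S = {Q. \<exists>g. module_hom sM sE g \<and> (\<forall>u\<in>U. g u = 0) \<and> (\<exists>x. g x \<noteq> 0) \<and> Q = {r. \<forall>x. sE r (g x) = 0}}"
  have "S \<noteq> {}" using H HU Hx0 e0 unfolding S_def by blast
  moreover have "\<forall>Q\<in>S. r_ideal Q" unfolding S_def using ann_ideal[OF ME] by blast
  ultimately obtain Q where QS: "Q \<in> S" and Qmax: "\<forall>J\<in>S. Q \<subseteq> J \<longrightarrow> J = Q"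
    using noeth_max[OF N] by blast
  then obtain g where g: "module_hom sM sE g" "\<forall>u\<in>U. g u = 0" "\<exists>x. g x \<noteq> 0"
    and Qg: "Q = {r. \<forall>x. sE r (g x) = 0}" unfolding S_def by blast
  have Qid: "r_ideal Q" using Qg ann_ideal[OF ME] by blast
  have gs: "g (sM r x) = sE r (g x)" for r x using g(1) by (simp add: module_hom_iff)
  have "prime_ideal Q" unfolding prime_ideal_def
  proof (intro conjI allI impI)
    show "r_ideal Q" by (fact Qid)
    have "1 \<notin> Q" using g(3) Qg by auto
    then show "Q \<noteq> UNIV" by blast
  next
    fix a b assume ab: "a * b \<in> Q"
    show "a \<in> Q \<or> b \<in> Q"
    proof (cases "a \<in> Q")
      case True then show ?thesis by blast
    next
      case False
      define g' where "g' x = sE a (g x)" for x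
      have "module_hom sM sE g'" unfolding module_hom_iff g'_def
        using g(1) MM ME by (auto simp: module_hom_iff E.scale_right_distrib mult.commute)
      moreover have "\<forall>u\<in>U. g' u = 0" using g(2) by (simp add: g'_def)
      moreover have "\<exists>x. g' x \<noteq> 0" using False Qg by (auto simp: g'_def)
      ultimately have S': "{r. \<forall>x. sE r (g' x) = 0} \<in> S" unfolding S_def by blast
      have "Q \<subseteq> {r. \<forall>x. sE r (g' x) = 0}"
      proof
        fix r assume "r \<in> Q"
        then have "sE r (g x) = 0" for x using Qg by blast
        then have "sE r (g' x) = 0" for x unfolding g'_def using E.scale_left_commute[of r a "g x"] by simp
        then show "r \<in> {r. \<forall>x. sE r (g' x) = 0}" by blast
      qed
      then have "{r. \<forall>x. sE r (g' x) = 0} = Q" using Qmax S' by blast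
      moreover have "b \<in> {r. \<forall>x. sE r (g' x) = 0}" using ab Qg by (auto simp: g'_def mult.commute)
      ultimately show ?thesis by blast
    qed
  qed
  then have "Q \<in> Ass_matlis_dual sM sE" unfolding Ass_matlis_dual_def using g(1) Qg by blast
  moreover have "P \<subseteq> Q"
  proof
    fix r assume "r \<in> P"
    then have "sM r x \<in> U" for x using PU by blast
    then have "g (sM r x) = 0" for x using g(2) by blast
    then have "sE r (g x) = 0" for x using gs by simp
    then show "r \<in> Q" using Qg by blast
  qed
  ultimately show ?thesis by blast
qed

theorem theorem1p11:
  fixes m :: "'a::comm_ring_1 set"
    and sM :: "'a \<Rightarrow> 'm::ab_group_add \<Rightarrow> 'm"
    and sE :: "'a \<Rightarrow> 'e::ab_group_add \<Rightarrow> 'e"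
  assumes "noetherian_ring TYPE('a)"
    and "local_ring_max m"
    and "module sM"
    and "injective_hull_residue sE m"
  shows "Ass_matlis_dual sM sE \<subseteq> Att sM \<and>
         maximal_elements (Ass_matlis_dual sM sE) = maximal_elements (Att sM)"
proof -
  interpret M: module sM by fact
  have ME: "module sE" and B: "baer_injective sE" and "\<exists>e. e \<noteq> 0 \<and> {r. sE r e = 0} = m"
    using assms(4) unfolding injective_hull_residue_def by blast+
  then obtain e where e0: "e \<noteq> 0" and em: "{r. sE r e = 0} = m" by blast
  interpret E: module sE by (rule ME)
  have sub: "Ass_matlis_dual sM sE \<subseteq> Att sM"
  proof
    fix P assume "P \<in> Ass_matlis_dual sM sE"
    then obtain f where Pp: "prime_ideal P" and f: "module_hom sM sE f" and Pf: "P = {r. \<forall>x. sE r (f x) = 0}"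
      by (auto simp: Ass_matlis_dual_def)
    have fa: "f (x + y) = f x + f y" and fs: "f (sM r x) = sE r (f x)" for x y r
      using f by (simp_all add: module_hom_iff)
    have f0: "f 0 = 0" using fs[of 0 0] by simp
    have "M.subspace {x. f x = 0}" by (rule M.subspaceI) (auto simp: fa fs f0)
    moreover have "P = {r. \<forall>x. sM r x \<in> {x. f x = 0}}" using Pf by (simp add: fs)
    ultimately show "P \<in> Att sM" using Pp by (auto simp: Att_def)
  qed
  have key: "\<And>P. P \<in> Att sM \<Longrightarrow> \<exists>Q\<in>Ass_matlis_dual sM sE. P \<subseteq> Q"
    using att_in_ass[OF assms(1,2,3) ME B e0 em] by blast
  have "maximal_elements (Ass_matlis_dual sM sE) = maximal_elements (Att sM)"
  proof
    show "maximal_elements (Ass_matlis_dual sM sE) \<subseteq> maximal_elements (Att sM)"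
    proof
      fix P assume P: "P \<in> maximal_elements (Ass_matlis_dual sM sE)"
      then have PA: "P \<in> Att sM" using sub by (auto simp: maximal_elements_def)
      have "Q = P" if QA: "Q \<in> Att sM" and PQ: "P \<subseteq> Q" for Q
      proof -
        obtain Q' where "Q' \<in> Ass_matlis_dual sM sE" "Q \<subseteq> Q'" using key[OF QA] by blast
        then have "Q' = P" using P PQ by (auto simp: maximal_elements_def)
        then show ?thesis using PQ \<open>Q \<subseteq> Q'\<close> by blast
      qed
      then show "P \<in> maximal_elements (Att sM)" using PA by (auto simp: maximal_elements_def)
    qed
  next
    show "maximal_elements (Att sM) \<subseteq> maximal_elements (Ass_matlis_dual sM sE)"
    proof
      fix P assume P: "P \<in> maximal_elements (Att sM)"
      then have PA: "P \<in> Att sM" by (auto simp: maximal_elements_def)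
      obtain Q where Q: "Q \<in> Ass_matlis_dual sM sE" "P \<subseteq> Q" using key PA by blast
      then have "Q = P" using P sub by (auto simp: maximal_elements_def)
      then have "P \<in> Ass_matlis_dual sM sE" using Q by simp
      moreover have "\<forall>Q\<in>Ass_matlis_dual sM sE. P \<subseteq> Q \<longrightarrow> Q = P"
        using P sub by (auto simp: maximal_elements_def)
      ultimately show "P \<in> maximal_elements (Ass_matlis_dual sM sE)" by (auto simp: maximal_elements_def)
    qed
  qed
  then show ?thesis using sub by blast
qed

end
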